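(* Let $F:\mathbb{R}^n\to\mathbb{R}$ be a finite PL function and $M>0$ such that $F(C)\subseteq(-M,M)$ for every flat cell $C$. Then the inclusions $F^{-1}(M)\hookrightarrow F^{-1}([M,\infty))$ and $F^{-1}(-M)\hookrightarrow F^{-1}((-\infty,-M])$ induce isomorphisms on singular homology in all degrees.
   Context: A finite PL function $F:\mathbb{R}^n\to\mathbb{R}$ is a continuous function affine-linear on each cell of some finite polyhedral complex (finite collection of polyhedral sets closed under faces, pairwise intersecting in common faces) whose union is $\mathbb{R}^n$; a cell is flat if $F$ is constant on it (all $0$-cells are flat). *)

theory Defs
  imports "HOL-Analysis.Analysis" "HOL-Homology.Homology"
begin

definition polyhedral_complex :: "'a::euclidean_space set set \<Rightarrow> bool" where
  "polyhedral_complex \<C> \<equiv>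
     finite \<C> \<and>
     (\<forall>S\<in>\<C>. polyhedron S \<and> S \<noteq> {}) \<and>
     (\<forall>F S. S \<in> \<C> \<and> F face_of S \<and> F \<noteq> {} \<longrightarrow> F \<in> \<C>) \<and>
     (\<forall>S S'. S \<in> \<C> \<and> S' \<in> \<C> \<longrightarrow> (S \<inter> S') face_of S \<and> (S \<inter> S') face_of S')"

definition PL_wrt :: "('a::euclidean_space \<Rightarrow> real) \<Rightarrow> 'a set set \<Rightarrow> bool" where
  "PL_wrt F \<C> \<equiv>
     polyhedral_complex \<C> \<and> \<Union>\<C> = UNIV \<and> continuous_on UNIV F \<and>
     (\<forall>C\<in>\<C>. \<exists>a b. \<forall>x\<in>C. F x = a \<bullet> x + b)"

definition finite_PL :: "('a::euclidean_space \<Rightarrow> real) \<Rightarrow> bool" where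
  "finite_PL F \<equiv> \<exists>\<C>. PL_wrt F \<C>"

definition flat_cell :: "('a \<Rightarrow> real) \<Rightarrow> 'a set \<Rightarrow> bool" where
  "flat_cell F C \<equiv> \<exists>c. \<forall>x\<in>C. F x = c"

end

theory Submission
  imports Defs
begin

lemma PL_facts:
  fixes F :: "'a::euclidean_space \<Rightarrow> real"
  assumes PL: "PL_wrt F \<C>"
  shows "finite \<C>" and cells: "\<forall>S\<in>\<C>. polyhedron S \<and> S \<noteq> {}"
    and faces: "\<forall>G S. S \<in> \<C> \<and> G face_of S \<and> G \<noteq> {} \<longrightarrow> G \<in> \<C>"
    and aff: "\<forall>C\<in>\<C>. \<exists>a b. \<forall>x\<in>C. F x = a \<bullet> x + b"
    and "\<forall>S S'. S \<in> \<C> \<and> S' \<in> \<C> \<longrightarrow> (S \<inter> S') face_of S \<and> (S \<inter> S') face_of S'"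
    and "\<Union>\<C> = UNIV" and "continuous_on UNIV F"
    using PL unfolding PL_wrt_def polyhedral_complex_def by blast+
lemma cell_low_point:
  fixes F :: "'a::euclidean_space \<Rightarrow> real"
  assumes PL: "PL_wrt F \<C>"
    and hyp: "\<forall>C\<in>\<C>. flat_cell F C \<longrightarrow> F ` C \<subseteq> {-M<..<M}"
    and D: "D \<in> \<C>"
  shows "\<exists>y\<in>D. F y < M"
proof -
  note PLf = PL_facts[OF PL]
  note fin = PLf(1) and cells = PLf(2) and faces = PLf(3) and aff = PLf(4)
  have ne: "{C\<in>\<C>. C \<subseteq> D} \<noteq> {}" using D by blast
  have finD: "finite {C\<in>\<C>. C \<subseteq> D}" using fin by simp
  obtain m where m: "m \<in> {C\<in>\<C>. C \<subseteq> D}" and mmin: "\<forall>b\<in>{C\<in>\<C>. C \<subseteq> D}. b \<subseteq> m \<longrightarrow> m = b"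
    using finite_has_minimal[OF finD ne] by blast
  have mC: "m \<in> \<C>" and mD: "m \<subseteq> D" using m by auto
  have polym: "polyhedron m" and mne: "m \<noteq> {}" using cells mC by auto
  have "rel_frontier m = {}"
  proof -
    have "G = {}" if "G face_of m" "G \<noteq> m" for G
    proof (rule ccontr)
      assume "G \<noteq> {}"
      then have "G \<in> \<C>" using faces that mC by blast
      moreover have "G \<subseteq> m" using face_of_imp_subset that(1) by blast
      ultimately show False using mmin mD that(2) by blast
    qed
    then have "\<Union> {G. G face_of m \<and> G \<noteq> m} = {}" by blast
    then show ?thesis using rel_frontier_of_polyhedron_alt[OF polym] by simp
  qed
  then have affm: "affine m" using rel_frontier_eq_empty by blast
  obtain a b where ab: "\<forall>x\<in>m. F x = a \<bullet> x + b" using aff mC by blast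
  show ?thesis
  proof (cases "flat_cell F m")
    case True
    then have sub: "F ` m \<subseteq> {-M<..<M}" using hyp mC by blast
    obtain z where z: "z \<in> m" using mne by blast
    then have "F z < M" using sub by auto
    then show ?thesis using z mD by blast
  next
    case False
    then obtain y1 y2 where y: "y1 \<in> m" "y2 \<in> m" "F y1 \<noteq> F y2"
      unfolding flat_cell_def by blast
    define t where "t = (M - 1 - F y1) / (F y2 - F y1)"
    define z where "z = (1 - t) *\<^sub>R y1 + t *\<^sub>R y2"
    have zm: "z \<in> m" unfolding z_def using mem_affine[OF affm y(1,2), of "1 - t" t] by simp
    have "F z = (1 - t) * F y1 + t * F y2"
      using ab zm y unfolding z_def by (simp add: inner_add_right algebra_simps)
    also have "\<dots> = F y1 + t * (F y2 - F y1)" by (simp add: algebra_simps)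
    also have "t * (F y2 - F y1) = M - 1 - F y1" using y(3) unfolding t_def by simp
    finally have "F z < M" by simp
    then show ?thesis using zm mD by blast
  qed
qed
lemma neg_hyp:
  fixes F :: "'a::euclidean_space \<Rightarrow> real"
  assumes PL: "PL_wrt F \<C>"
    and hyp: "\<forall>C\<in>\<C>. flat_cell F C \<longrightarrow> F ` C \<subseteq> {-M<..<M}"
  shows "PL_wrt (\<lambda>x. - F x) \<C>" "\<forall>C\<in>\<C>. flat_cell (\<lambda>x. - F x) C \<longrightarrow> (\<lambda>x. - F x) ` C \<subseteq> {-M<..<M}"
proof -
  have h: "polyhedral_complex \<C>" "\<Union>\<C> = UNIV" "continuous_on UNIV F"
      "\<forall>C\<in>\<C>. \<exists>a b. \<forall>x\<in>C. F x = a \<bullet> x + b"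
    using PL unfolding PL_wrt_def by blast+
  have c: "continuous_on UNIV (\<lambda>x. - F x)" using h(3) by (rule continuous_on_minus)
  have a: "\<forall>C\<in>\<C>. \<exists>a b. \<forall>x\<in>C. - F x = a \<bullet> x + b"
  proof
    fix C assume "C \<in> \<C>"
    then obtain a b where ab: "\<forall>x\<in>C. F x = a \<bullet> x + b" using h(4) by blast
    have "\<forall>x\<in>C. - F x = (- a) \<bullet> x + (- b)" using ab by simp
    then show "\<exists>a b. \<forall>x\<in>C. - F x = a \<bullet> x + b" by blast
  qed
  show "PL_wrt (\<lambda>x. - F x) \<C>" unfolding PL_wrt_def using h(1,2) c a by blast
  show "\<forall>C\<in>\<C>. flat_cell (\<lambda>x. - F x) C \<longrightarrow> (\<lambda>x. - F x) ` C \<subseteq> {-M<..<M}"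
  proof (intro ballI impI)
    fix C assume C: "C \<in> \<C>" "flat_cell (\<lambda>x. - F x) C"
    then obtain c where "\<forall>x\<in>C. - F x = c" unfolding flat_cell_def by blast
    then have "\<forall>x\<in>C. F x = - c" by (metis minus_minus)
    then have "flat_cell F C" unfolding flat_cell_def by blast
    then have "F ` C \<subseteq> {-M<..<M}" using hyp C by blast
    then show "(\<lambda>x. - F x) ` C \<subseteq> {-M<..<M}" by auto
  qed
qed
lemma deform_core:
  fixes F :: "'a::euclidean_space \<Rightarrow> real"
  assumes PL: "PL_wrt F \<C>" and good: "\<forall>D\<in>\<C>. \<exists>y\<in>D. F y < M"
  shows "hom_induced p (subtopology euclidean (F -` {M})) {}
                   (subtopology euclidean (F -` {M..})) {} id
       \<in> iso (homology_group p (subtopology euclidean (F -` {M})))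
             (homology_group p (subtopology euclidean (F -` {M..})))"
proof -
  note PLf = PL_facts[OF PL]
  note fin = PLf(1) and cells = PLf(2) and faces = PLf(3) and aff = PLf(4)
    and inter = PLf(5) and cover = PLf(6) and contF = PLf(7)
  have convC: "convex C" if "C \<in> \<C>" for C using cells that polyhedron_imp_convex by blast
  have closedC: "closed C" if "C \<in> \<C>" for C using cells that polyhedron_imp_closed by blast
  have segF: "(1-t) *\<^sub>R u + t *\<^sub>R v \<in> C \<and> F ((1-t) *\<^sub>R u + t *\<^sub>R v) = (1-t) * F u + t * F v"
    if hC: "C \<in> \<C>" "u \<in> C" "v \<in> C" "0 \<le> t" "t \<le> 1" for C u v t
  proof -
    have m: "(1-t) *\<^sub>R u + t *\<^sub>R v \<in> C"
      using convexD_alt[OF convC[OF hC(1)] hC(2,3,4,5)] .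
    obtain a b where ab: "\<forall>x\<in>C. F x = a \<bullet> x + b" using bspec[OF aff hC(1)] by (elim exE)
    have e1: "F ((1-t) *\<^sub>R u + t *\<^sub>R v) = a \<bullet> ((1-t) *\<^sub>R u + t *\<^sub>R v) + b" using bspec[OF ab m] .
    have e2: "F u = a \<bullet> u + b" using bspec[OF ab hC(2)] .
    have e3: "F v = a \<bullet> v + b" using bspec[OF ab hC(3)] .
    have "F ((1-t) *\<^sub>R u + t *\<^sub>R v) = (1-t) * F u + t * F v"
      unfolding e1 e2 e3 inner_add_right inner_scaleR_right by (simp add: algebra_simps)
    with m show ?thesis by (rule conjI)
  qed
  have mincell: "\<exists>D\<in>\<C>. x \<in> D \<and> (\<forall>C\<in>\<C>. x \<in> C \<longrightarrow> D \<subseteq> C)" for x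
  proof -
    have ne: "{C\<in>\<C>. x \<in> C} \<noteq> {}" using cover by blast
    have finx: "finite {C\<in>\<C>. x \<in> C}" using fin by simp
    obtain D where D: "D \<in> {C\<in>\<C>. x \<in> C}" and Dmin: "\<forall>b\<in>{C\<in>\<C>. x \<in> C}. b \<subseteq> D \<longrightarrow> D = b"
      using finite_has_minimal[OF finx ne] by blast
    have "D \<subseteq> C" if "C \<in> \<C>" "x \<in> C" for C
    proof -
      have "(D \<inter> C) face_of D" using inter D that by blast
      moreover have "D \<inter> C \<noteq> {}" using D that by blast
      ultimately have "D \<inter> C \<in> \<C>" using faces D by blast
      then have "D = D \<inter> C" using Dmin D that by blast
      then show ?thesis by blast
    qed
    then show ?thesis using D by blast
  qed
  obtain y where y: "\<forall>D\<in>\<C>. y D \<in> D \<and> F (y D) < M" using good by metis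
  define N where "N D = \<Union>{C\<in>\<C>. \<not> D \<subseteq> C}" for D
  define w where "w D = (if N D = {} then (\<lambda>x::'a. 1::real) else (\<lambda>x. infdist x (N D)))" for D
  define W where "W x = (\<Sum>D\<in>\<C>. w D x)" for x
  define q where "q x = (\<Sum>D\<in>\<C>. (w D x / W x) *\<^sub>R y D)" for x
  have wnn: "w D x \<ge> 0" for D x by (simp add: w_def infdist_nonneg)
  have wpos: "D \<subseteq> C" if "w D x \<noteq> 0" "C \<in> \<C>" "x \<in> C" for D x C
  proof (cases "N D = {}")
    case True then show ?thesis using that unfolding N_def by blast
  next
    case False
    then have "x \<notin> N D" using that unfolding w_def by auto
    then show ?thesis using that unfolding N_def by blast
  qed
  have closedN: "closed (N D)" for D
    unfolding N_def by (rule closed_Union) (use fin closedC in auto)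
  have Wpos: "W x > 0" for x
  proof -
    obtain D where D: "D \<in> \<C>" "x \<in> D" "\<forall>C\<in>\<C>. x \<in> C \<longrightarrow> D \<subseteq> C" using mincell by blast
    have "w D x > 0"
    proof (cases "N D = {}")
      case True then show ?thesis by (simp add: w_def)
    next
      case False
      have "x \<notin> N D" using D unfolding N_def by blast
      then have "infdist x (N D) \<noteq> 0" using in_closed_iff_infdist_zero[OF closedN False] by blast
      then show ?thesis using False infdist_nonneg[of x "N D"] by (simp add: w_def)
    qed
    also have "w D x \<le> W x" unfolding W_def
      by (rule member_le_sum) (use D fin wnn in auto)
    finally show ?thesis .
  qed
  have contw: "continuous_on UNIV (w D)" for D
    by (cases "N D = {}") (auto simp: w_def intro!: continuous_intros)
  have Wne: "W x \<noteq> 0" for x using Wpos[of x] by simp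
  have contW: "continuous_on UNIV W"
    unfolding W_def[abs_def] by (intro continuous_intros contw)
  have contq: "continuous_on UNIV q"
    unfolding q_def[abs_def]
    by (intro continuous_intros contw contW) (use Wne in auto)
  have qC: "q x \<in> C \<and> F (q x) < M" if C: "C \<in> \<C>" "x \<in> C" for x C
  proof -
    define I where "I = {D\<in>\<C>. D \<subseteq> C}"
    have finI: "finite I" using fin unfolding I_def by auto
    have zero: "w D x = 0" if "D \<in> \<C> - I" for D using wpos C that unfolding I_def by blast
    have IC: "I \<subseteq> \<C>" unfolding I_def by blast
    have WI: "W x = (\<Sum>D\<in>I. w D x)" unfolding W_def
      by (rule sum.mono_neutral_right[OF fin IC]) (use zero in auto)
    have qI: "q x = (\<Sum>D\<in>I. (w D x / W x) *\<^sub>R y D)" unfolding q_def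
      by (rule sum.mono_neutral_right[OF fin IC]) (use zero in auto)
    have s1: "(\<Sum>D\<in>I. w D x / W x) = 1"
      using Wpos[of x] by (simp add: WI[symmetric] sum_divide_distrib[symmetric])
    have nn: "\<And>D. D \<in> I \<Longrightarrow> 0 \<le> w D x / W x" using wnn Wpos by (simp add: less_imp_le)
    have yC: "\<And>D. D \<in> I \<Longrightarrow> y D \<in> C" using y unfolding I_def by blast
    have inC: "q x \<in> C" unfolding qI
      by (rule convex_sum[OF finI convC[OF C(1)] s1 nn yC])
    obtain a b where ab: "\<forall>z\<in>C. F z = a \<bullet> z + b" using bspec[OF aff C(1)] by (elim exE)
    have "F (q x) = a \<bullet> q x + b" using bspec[OF ab inC] .
    also have "\<dots> = (\<Sum>D\<in>I. (w D x / W x) * (a \<bullet> y D)) + (\<Sum>D\<in>I. w D x / W x) * b"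
      unfolding qI by (simp add: inner_sum_right s1)
    also have "\<dots> = (\<Sum>D\<in>I. (w D x / W x) * F (y D))"
    proof -
      have "(\<Sum>D\<in>I. (w D x / W x) * F (y D)) = (\<Sum>D\<in>I. (w D x / W x) * (a \<bullet> y D) + (w D x / W x) * b)"
        by (rule sum.cong) (auto simp: ab yC distrib_left)
      also have "\<dots> = (\<Sum>D\<in>I. (w D x / W x) * (a \<bullet> y D)) + (\<Sum>D\<in>I. w D x / W x) * b"
        by (simp only: sum.distrib sum_distrib_right)
      finally show ?thesis by simp
    qed
    finally have Fq: "F (q x) = (\<Sum>D\<in>I. (w D x / W x) * F (y D))" .
    obtain D0 where D0: "D0 \<in> I" "w D0 x / W x > 0"
    proof (rule ccontr)
      note D0rule = that
      assume "\<not> thesis"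
      have "w D x / W x = 0" if hD: "D \<in> I" for D
      proof -
        have "\<not> 0 < w D x / W x"
        proof
          assume "0 < w D x / W x"
          then have thesis by (rule D0rule[OF hD])
          then show False using \<open>\<not> thesis\<close> by contradiction
        qed
        then show ?thesis using nn[OF hD] by linarith
      qed
      then have "\<forall>D\<in>I. w D x / W x = 0" by blast
      then have "(\<Sum>D\<in>I. w D x / W x) = 0" by (rule sum.neutral)
      then show False using s1 by simp
    qed
    have "0 < (\<Sum>D\<in>I. (w D x / W x) * (M - F (y D)))"
    proof -
      have yI: "F (y D) < M" if hD: "D \<in> I" for D
      proof -
        have "D \<in> \<C>" using hD unfolding I_def by blast
        then show ?thesis using y by blast
      qed
      have pos: "0 < (w D0 x / W x) * (M - F (y D0))"
        using D0(2) yI[OF D0(1)] by (intro mult_pos_pos) simp_all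
      have nonneg: "0 \<le> (w D x / W x) * (M - F (y D))" if hD: "D \<in> I" for D
        using nn[OF hD] yI[OF hD] by (intro mult_nonneg_nonneg) simp_all
      show ?thesis
        by (rule sum_pos2[where f="\<lambda>D. (w D x / W x) * (M - F (y D))", OF finI D0(1) pos nonneg])
    qed
    then have "F (q x) < M"
    proof -
      have "(\<Sum>D\<in>I. (w D x / W x) * (M - F (y D))) = (\<Sum>D\<in>I. w D x / W x) * M - (\<Sum>D\<in>I. (w D x / W x) * F (y D))"
        by (simp only: right_diff_distrib sum_subtractf sum_distrib_right)
      then show ?thesis using s1 Fq \<open>0 < (\<Sum>D\<in>I. (w D x / W x) * (M - F (y D)))\<close> by simp
    qed
    then show ?thesis using inC by blast
  qed
  define S where "S = F -` {M..}"
  define T where "T = F -` {M}"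
  define lam where "lam x = (F x - M) / (F x - F (q x))" for x
  define r where "r x = (1 - lam x) *\<^sub>R x + lam x *\<^sub>R q x" for x
  have rprop: "r x \<in> C \<and> F (r x) = M" if "x \<in> S" "C \<in> \<C>" "x \<in> C" for x C
  proof -
    have q: "q x \<in> C" "F (q x) < M" using qC that(2,3) by auto
    have Fx: "F x \<ge> M" using that(1) S_def by auto
    have den: "F x - F (q x) > 0" using q Fx by simp
    have l: "0 \<le> lam x" "lam x \<le> 1" using q Fx den unfolding lam_def
      by (simp_all add: pos_divide_le_eq)
    have "r x \<in> C \<and> F (r x) = (1 - lam x) * F x + lam x * F (q x)"
      unfolding r_def by (rule segF[OF that(2,3) q(1) l])
    moreover have "(1 - lam x) * F x + lam x * F (q x) = M"
    proof -
      have "(1 - lam x) * F x + lam x * F (q x) = F x - lam x * (F x - F (q x))"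
        by (simp add: algebra_simps)
      also have "lam x * (F x - F (q x)) = F x - M" unfolding lam_def using den by simp
      finally show ?thesis by simp
    qed
    ultimately show ?thesis by simp
  qed
  have rS: "r x \<in> T" if "x \<in> S" for x
    using rprop[OF that] cover T_def by blast
  have rid: "r x = x" if "x \<in> T" for x
    using that unfolding r_def lam_def T_def by simp
  have TS: "T \<subseteq> S" unfolding S_def T_def by auto
  have contr: "continuous_on S r"
  proof -
    have "F x - F (q x) \<noteq> 0" if "x \<in> S" for x
    proof -
      obtain C where "C \<in> \<C>" "x \<in> C" using cover by blast
      then show ?thesis using qC that S_def by fastforce
    qed
    moreover have cFq: "continuous_on S (\<lambda>x. F (q x))"
      using continuous_on_subset[OF continuous_on_compose2[OF contF contq] subset_UNIV] by simp
    ultimately show ?thesis unfolding r_def[abs_def] lam_def[abs_def]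
      by (intro continuous_intros continuous_on_subset[OF contF] continuous_on_subset[OF contq]
          cFq) auto
  qed
  have ret: "retraction_maps (top_of_set S) (top_of_set T) r id"
    unfolding retraction_maps_def using contr rS rid TS
    by (auto simp: continuous_on_id)
  have hom: "homotopic_with (\<lambda>z. True) (top_of_set S) (top_of_set S) r id"
  proof (rule homotopic_with_linear[OF contr continuous_on_id'])
    fix x assume x: "x \<in> S"
    obtain C where C: "C \<in> \<C>" "x \<in> C" using cover by blast
    have rx: "r x \<in> C" "F (r x) = M" using rprop[OF x C(1,2)] by auto
    show "closed_segment (r x) (id x) \<subseteq> S"
    proof
      fix z assume "z \<in> closed_segment (r x) (id x)"
      then obtain u where u: "0 \<le> u" "u \<le> 1" "z = (1-u) *\<^sub>R r x + u *\<^sub>R x"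
        unfolding closed_segment_def by auto
      have "F z = (1-u) * M + u * F x" using segF[OF C(1) rx(1) C(2) u(1,2)] rx u by simp
      moreover have "F x \<ge> M" using x S_def by auto
      moreover have "u * M \<le> u * F x" using \<open>F x \<ge> M\<close> u(1) by (rule mult_left_mono)
      moreover have "(1 - u) * M = M - u * M" by (simp add: algebra_simps)
      ultimately have "F z \<ge> M" by linarith
      then show "z \<in> S" unfolding S_def by auto
    qed
  qed
  have eqP: "(\<lambda>h::'a\<Rightarrow>'a. h ` {} \<subseteq> {}) = (\<lambda>z. True)" by simp
  have "hom_induced p (top_of_set T) {} (top_of_set S) {} id
        \<in> iso (relative_homology_group p (top_of_set T) {}) (relative_homology_group p (top_of_set S) {})"
    by (rule deformation_retract_relative_homology_group_isomorphism_id[OF ret])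
       (use hom eqP in auto)
  then show ?thesis unfolding S_def T_def .
qed

theorem mainTheorem16:
  fixes F :: "'a::euclidean_space \<Rightarrow> real" and \<C> :: "'a set set" and M :: real
  assumes "PL_wrt F \<C>"
    and "M > 0"
    and "\<forall>C\<in>\<C>. flat_cell F C \<longrightarrow> F ` C \<subseteq> {-M<..<M}"
  shows "\<forall>p::int.
     hom_induced p (subtopology euclidean (F -` {M})) {}
                   (subtopology euclidean (F -` {M..})) {} id
       \<in> iso (homology_group p (subtopology euclidean (F -` {M})))
             (homology_group p (subtopology euclidean (F -` {M..})))
   \<and> hom_induced p (subtopology euclidean (F -` {-M})) {}
                   (subtopology euclidean (F -` {..-M})) {} id
       \<in> iso (homology_group p (subtopology euclidean (F -` {-M})))
             (homology_group p (subtopology euclidean (F -` {..-M})))"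
proof -
  have low1: "\<forall>D\<in>\<C>. \<exists>y\<in>D. F y < M" using cell_low_point[OF assms(1) assms(3)] by blast
  have PL2: "PL_wrt (\<lambda>x. - F x) \<C>" using neg_hyp[OF assms(1) assms(3)] by blast
  have hyp2: "\<forall>C\<in>\<C>. flat_cell (\<lambda>x. - F x) C \<longrightarrow> (\<lambda>x. - F x) ` C \<subseteq> {-M<..<M}"
    using neg_hyp[OF assms(1) assms(3)] by blast
  have low2: "\<forall>D\<in>\<C>. \<exists>y\<in>D. - F y < M" using cell_low_point[OF PL2 hyp2] by blast
  have e1: "(\<lambda>x. - F x) -` {M} = F -` {-M}" by auto
  have e2: "(\<lambda>x. - F x) -` {M..} = F -` {..-M}" by auto
  show ?thesis
  proof
    fix p :: int
    note A = deform_core[OF assms(1) low1, of p]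
    note B = deform_core[OF PL2 low2, of p]
    show "hom_induced p (subtopology euclidean (F -` {M})) {}
                   (subtopology euclidean (F -` {M..})) {} id
       \<in> iso (homology_group p (subtopology euclidean (F -` {M})))
             (homology_group p (subtopology euclidean (F -` {M..})))
   \<and> hom_induced p (subtopology euclidean (F -` {-M})) {}
                   (subtopology euclidean (F -` {..-M})) {} id
       \<in> iso (homology_group p (subtopology euclidean (F -` {-M})))
             (homology_group p (subtopology euclidean (F -` {..-M})))"
      using A B unfolding e1 e2 by blast
  qed
qed

end
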